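(* Let $n\ge1$ be an integer and $\beta>0$, $J>0$, $H\in\mathbb{R}$. Let $P=S_3(123,321)=\{132,213,231,312\}\subset S_3$. For $\pi\in S_3$ let $\mathrm{CDdes}(\pi)=\mathrm{des}(\pi)+\mathrm{des}(\pi^{-1})$, where $\mathrm{des}(\pi)$ is the number of $i\in\{1,2\}$ with $\pi(i)>\pi(i+1)$; put $\phi(\alpha,\sigma)=1-\tfrac12\mathrm{CDdes}(\alpha^{-1}\sigma)$ and $\phi(\pi)=1-\tfrac12\mathrm{CDdes}(\pi)$. For $\vec\pi=(\pi^{(1)},\ldots,\pi^{(n)})\in P^n$ with $\pi^{(n+1)}:=\pi^{(1)}$, let $\mathcal{H}(\vec\pi)=-J\sum_{i=1}^n\phi(\pi^{(i)},\pi^{(i+1)})-H\sum_{i=1}^n\phi(\pi^{(i)})$ and $Z_n(\beta)=\sum_{\vec\pi\in P^n}\exp(-\beta\mathcal{H}(\vec\pi))$. Then $$Z_n(\beta)=e^{\beta Jn}\left(2(1-e^{-\beta J})^{n}(1+e^{-\beta J})^{n}+(1-e^{-\beta J})^{2n}+(1+e^{-\beta J})^{2n}\right),$$ and the free energy $f(\beta):=-\lim_{n\to\infty}\frac{1}{\beta n}\ln Z_n(\beta)$ equals $$f(\beta)=-J-\frac{2}{\beta}\ln\left(1+e^{-\beta J}\right).$$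
   Context: Permutations of $\{1,2,3\}$ are written in one-line notation $\pi(1)\pi(2)\pi(3)$ and composed as functions, $(\alpha^{-1}\sigma)(x)=\alpha^{-1}(\sigma(x))$. This is the 1D 3-permaspin model on a ring of $n$ sites with permaspins restricted to $P$, in an external field $H$. *)

theory Defs
  imports Complex_Main
begin

text \<open>Permutations of {1,2,3} are functions nat => nat permuting {1,2,3} and fixing
everything else. perm_of_list [a,b,c] is the permutation with one-line notation abc.\<close>

definition perm_of_list :: "nat list \<Rightarrow> (nat \<Rightarrow> nat)" where
  "perm_of_list l = (\<lambda>x. if x \<in> {1,2,3} then l ! (x - 1) else x)"

definition P :: "(nat \<Rightarrow> nat) set" where
  "P = {perm_of_list [1,3,2], perm_of_list [2,1,3], perm_of_list [2,3,1], perm_of_list [3,1,2]}"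

definition des :: "(nat \<Rightarrow> nat) \<Rightarrow> nat" where
  "des \<pi> = card {i \<in> {1::nat,2}. \<pi> i > \<pi> (i + 1)}"

definition CDdes :: "(nat \<Rightarrow> nat) \<Rightarrow> nat" where
  "CDdes \<pi> = des \<pi> + des (inv \<pi>)"

definition phi1 :: "(nat \<Rightarrow> nat) \<Rightarrow> real" where
  "phi1 \<pi> = 1 - real (CDdes \<pi>) / 2"

definition phi2 :: "(nat \<Rightarrow> nat) \<Rightarrow> (nat \<Rightarrow> nat) \<Rightarrow> real" where
  "phi2 \<alpha> \<sigma> = 1 - real (CDdes (inv \<alpha> \<circ> \<sigma>)) / 2"

text \<open>Configurations on the ring: lists of length n with entries in P; site i+1 is
list index i, and pi^(n+1) = pi^(1) via index (i+1) mod n.\<close>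
definition configs :: "nat \<Rightarrow> (nat \<Rightarrow> nat) list set" where
  "configs n = {xs. length xs = n \<and> set xs \<subseteq> P}"

definition hamiltonian :: "real \<Rightarrow> real \<Rightarrow> (nat \<Rightarrow> nat) list \<Rightarrow> real" where
  "hamiltonian J H xs =
     - J * (\<Sum>i<length xs. phi2 (xs ! i) (xs ! ((i + 1) mod length xs)))
     - H * (\<Sum>i<length xs. phi1 (xs ! i))"

definition Z :: "real \<Rightarrow> real \<Rightarrow> nat \<Rightarrow> real \<Rightarrow> real" where
  "Z J H n \<beta> = (\<Sum>xs\<in>configs n. exp (- \<beta> * hamiltonian J H xs))"

end

theory Submission
  imports Defs
begin


definition "p132 = perm_of_list [1,3,2]"
definition "p213 = perm_of_list [2,1,3]"
definition "p231 = perm_of_list [2,3,1]"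
definition "p312 = perm_of_list [3,1,2]"

lemma pv: "p132 x = (if x = 1 then 1 else if x = 2 then 3 else if x = 3 then 2 else x)"
  "p213 x = (if x = 1 then 2 else if x = 2 then 1 else if x = 3 then 3 else x)"
  "p231 x = (if x = 1 then 2 else if x = 2 then 3 else if x = 3 then 1 else x)"
  "p312 x = (if x = 1 then 3 else if x = 2 then 1 else if x = 3 then 2 else x)"
  by (auto simp: p132_def p213_def p231_def p312_def perm_of_list_def)

lemma inv132: "inv p132 = p132" by (rule inv_equality) (auto simp: pv)
lemma inv213: "inv p213 = p213" by (rule inv_equality) (auto simp: pv)
lemma inv231: "inv p231 = p312" by (rule inv_equality) (auto simp: pv)
lemma inv312: "inv p312 = p231" by (rule inv_equality) (auto simp: pv)

lemma des_eq: "des \<pi> = (if \<pi> 2 < \<pi> 1 then 1 else 0) + (if \<pi> 3 < \<pi> 2 then 1 else 0)"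
proof -
  have "{i \<in> {1::nat,2}. \<pi> i > \<pi> (i + 1)} = (if \<pi> 2 < \<pi> 1 then {1} else {}) \<union> (if \<pi> 3 < \<pi> 2 then {2} else {})"
    by (auto simp: numeral_2_eq_2 numeral_3_eq_3)
  then show ?thesis unfolding des_def by auto
qed

lemma inv_comp: assumes "\<And>x. a' (a x) = x" "\<And>x. a (a' x) = x" "\<And>x. s' (s x) = x" "\<And>x. s (s' x) = x"
  shows "inv (a' \<circ> s) = s' \<circ> a"
  by (rule inv_equality) (simp_all add: assms)

fun enc :: "bool \<times> bool \<Rightarrow> nat \<Rightarrow> nat" where
  "enc (False, False) = p132"
| "enc (True, True) = p231"
| "enc (False, True) = p213"
| "enc (True, False) = p312"

fun encinv :: "bool \<times> bool \<Rightarrow> nat \<Rightarrow> nat" where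
  "encinv (False, False) = p132"
| "encinv (True, True) = p312"
| "encinv (False, True) = p213"
| "encinv (True, False) = p231"

lemma inv_enc: "inv (enc p) = encinv p"
  by (cases p rule: enc.cases) (simp_all add: inv132 inv213 inv231 inv312)

lemma enc_encinv: "enc p (encinv p x) = x" "encinv p (enc p x) = x"
  by (cases p rule: enc.cases; auto simp: pv)+

lemma phi1_enc: "phi1 (enc p) = 0"
  by (cases p rule: enc.cases) (simp_all add: phi1_def CDdes_def des_eq inv132 inv213 inv231 inv312 pv)


lemma phi2_enc0: "phi2 (enc p) (enc q) = 1 - real (des (encinv p \<circ> enc q) + des (encinv q \<circ> enc p)) / 2"
proof -
  have "inv (encinv p \<circ> enc q) = encinv q \<circ> enc p"
    by (rule inv_comp) (simp_all add: enc_encinv)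
  then show ?thesis unfolding phi2_def CDdes_def inv_enc by simp
qed

lemma phi2_enc: "phi2 (enc p) (enc q) = 1 - (if fst p = fst q then 0 else 1) - (if snd p = snd q then 0 else 1)"
proof -
  obtain a b c d where "p = (a,b)" "q = (c,d)" by fastforce
  then show ?thesis unfolding phi2_enc0
    by (cases a; cases b; cases c; cases d) (simp_all add: des_eq pv)
qed

lemma enc_inj: "inj enc"
proof (rule injI)
  fix p q assume "enc p = enc q"
  then have "enc p 1 = enc q 1" "enc p 2 = enc q 2" by auto
  show "p = q"
  proof -
    obtain a b c d where "p = (a,b)" "q = (c,d)" by fastforce
    then show ?thesis using \<open>enc p 1 = enc q 1\<close> \<open>enc p 2 = enc q 2\<close>
      by (cases a; cases b; cases c; cases d) (simp_all add: pv)
  qed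
qed

lemma P_enc: "P = range enc"
proof -
  have U: "(UNIV :: (bool\<times>bool) set) = {(False,False),(True,True),(False,True),(True,False)}" by auto
  have "range enc = {p132, p231, p213, p312}" by (simp only: U image_insert image_empty enc.simps)
  moreover have "P = {p132, p213, p231, p312}" by (simp only: P_def p132_def p213_def p231_def p312_def)
  ultimately show ?thesis by (simp add: insert_commute)
qed



fun chainw :: "('a \<Rightarrow> 'a \<Rightarrow> real) \<Rightarrow> 'a \<Rightarrow> 'a list \<Rightarrow> 'a \<Rightarrow> real" where
  "chainw f a [] b = f a b"
| "chainw f a (c # l) b = f a c * chainw f c l b"

definition G :: "('a::finite \<Rightarrow> 'a \<Rightarrow> real) \<Rightarrow> nat \<Rightarrow> 'a \<Rightarrow> 'a \<Rightarrow> real" where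
  "G f m a b = (\<Sum>l\<in>{l::'a list. length l = m}. chainw f a l b)"

lemma fin_lists: "finite {l::'a::finite list. length l = m}"
  using finite_lists_length_eq[of "UNIV::'a set" m] by simp

lemma lists_Suc: "{l::'a list. length l = Suc m} = (\<lambda>(c,l). c # l) ` (UNIV \<times> {l. length l = m})"
  by (auto simp: length_Suc_conv)

lemma inj_Cons: "inj_on (\<lambda>(c,l). c # l) X"
  by (auto simp: inj_on_def)

lemma sum_lists_Suc: "(\<Sum>l\<in>{l::'a::finite list. length l = Suc m}. g l) = (\<Sum>c\<in>UNIV. \<Sum>l\<in>{l. length l = m}. g (c # l))"
proof -
  have "(\<Sum>l\<in>{l::'a::finite list. length l = Suc m}. g l) = (\<Sum>(c,l)\<in>UNIV \<times> {l. length l = m}. g (c # l))"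
    unfolding lists_Suc by (subst sum.reindex[OF inj_Cons]) (simp add: case_prod_beta)
  then show ?thesis by (simp add: sum.cartesian_product)
qed

lemma G_Suc: "G f (Suc m) a b = (\<Sum>c\<in>UNIV. f a c * G f m c b)"
  unfolding G_def sum_lists_Suc by (simp add: sum_distrib_left)

lemma G_0: "G f 0 a b = f a b"
  unfolding G_def by simp

lemma chain_prod: "chainw f a l b = (\<Prod>i<length l. f ((a#l)!i) ((a#l)!Suc i)) * f (last (a#l)) b"
proof (induction l arbitrary: a)
  case Nil then show ?case by simp
next
  case (Cons c l)
  have "last (a#c#l) = last (c#l)" by simp
  then show ?case by (simp add: Cons.IH prod.lessThan_Suc_shift mult.assoc del: last.simps prod.lessThan_Suc)
qed

lemma cyc_eq: "(\<Sum>ys\<in>{ys::'a::finite list. length ys = Suc m}. \<Prod>i<Suc m. f (ys!i) (ys!((i+1) mod Suc m)))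
   = (\<Sum>a\<in>UNIV. G f m a a)"
proof -
  have "(\<Prod>i<Suc m. f ((a#l)!i) ((a#l)!((i+1) mod Suc m))) = chainw f a l a" if "length l = m" for a l
  proof -
    have "(\<Prod>i<Suc m. f ((a#l)!i) ((a#l)!((i+1) mod Suc m)))
       = (\<Prod>i<m. f ((a#l)!i) ((a#l)!((i+1) mod Suc m))) * f ((a#l)!m) ((a#l)!0)"
      by (simp add: prod.lessThan_Suc)
    also have "(\<Prod>i<m. f ((a#l)!i) ((a#l)!((i+1) mod Suc m))) = (\<Prod>i<m. f ((a#l)!i) ((a#l)!Suc i))"
      by (rule prod.cong) auto
    also have "(a#l)!m = last (a#l)" using that by (metis last_conv_nth length_Cons list.distinct(1) diff_Suc_1)
    finally show ?thesis using that by (simp add: chain_prod)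
  qed
  then show ?thesis unfolding sum_lists_Suc G_def by simp
qed



definition w :: "real \<Rightarrow> bool \<times> bool \<Rightarrow> bool \<times> bool \<Rightarrow> real" where
  "w x p q = (if fst p = fst q then 1 else x) * (if snd p = snd q then 1 else x)"

definition chi :: "bool \<times> bool \<Rightarrow> bool \<times> bool \<Rightarrow> real" where
  "chi k p = (if fst k \<and> fst p then -1 else 1) * (if snd k \<and> snd p then -1 else 1)"

definition lam :: "real \<Rightarrow> bool \<times> bool \<Rightarrow> real" where
  "lam x k = (if fst k then 1 - x else 1 + x) * (if snd k then 1 - x else 1 + x)"

lemma sum_bb: "(\<Sum>c\<in>UNIV. f c) = f (False,False) + f (False,True) + f (True,False) + f (True,True)"
proof -
  have U: "(UNIV :: (bool\<times>bool) set) = {(False,False),(False,True),(True,False),(True,True)}" by auto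
  show ?thesis unfolding U by (simp add: add.assoc)
qed

lemma eig: "(\<Sum>c\<in>UNIV. w x a c * chi k c) = lam x k * chi k a"
proof -
  obtain a1 a2 k1 k2 where "a = (a1,a2)" "k = (k1,k2)" by fastforce
  then show ?thesis unfolding sum_bb w_def chi_def lam_def
    by (cases a1; cases a2; cases k1; cases k2) (simp_all add: algebra_simps)
qed

lemma chi_sq: "chi k a * chi k a = 1"
  unfolding chi_def by auto

lemma w_expand: "w x a b = (\<Sum>k\<in>UNIV. lam x k * chi k a * chi k b) / 4"
proof -
  obtain a1 a2 b1 b2 where "a = (a1,a2)" "b = (b1,b2)" by fastforce
  then show ?thesis unfolding sum_bb w_def chi_def lam_def
    by (cases a1; cases a2; cases b1; cases b2) (simp_all add: algebra_simps)
qed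

lemma G_closed: "G (w x) m a b = (\<Sum>k\<in>UNIV. lam x k ^ Suc m * chi k a * chi k b) / 4"
proof (induction m arbitrary: a)
  case 0 then show ?case by (simp add: G_0 w_expand)
next
  case (Suc m)
  have "G (w x) (Suc m) a b = (\<Sum>c\<in>UNIV. w x a c * ((\<Sum>k\<in>UNIV. lam x k ^ Suc m * chi k c * chi k b) / 4))"
    by (simp add: G_Suc Suc.IH)
  also have "\<dots> = (\<Sum>c\<in>UNIV. \<Sum>k\<in>UNIV. w x a c * (lam x k ^ Suc m * chi k c * chi k b)) / 4"
    by (simp add: sum_divide_distrib sum_distrib_left)
  also have "\<dots> = (\<Sum>k\<in>UNIV. \<Sum>c\<in>UNIV. w x a c * (lam x k ^ Suc m * chi k c * chi k b)) / 4"
    by (subst sum.swap) (rule refl)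
  also have "\<dots> = (\<Sum>k\<in>UNIV. lam x k ^ Suc m * (\<Sum>c\<in>UNIV. w x a c * chi k c) * chi k b) / 4"
    by (simp add: sum_distrib_left sum_distrib_right mult.commute mult.left_commute)
  also have "\<dots> = (\<Sum>k\<in>UNIV. lam x k ^ Suc (Suc m) * chi k a * chi k b) / 4"
    by (simp only: eig) (simp add: mult.commute mult.left_commute)
  finally show ?case .
qed

lemma trace: "(\<Sum>a\<in>UNIV. G (w x) m a a) = (\<Sum>k\<in>UNIV. lam x k ^ Suc m)"
proof -
  have "(\<Sum>a\<in>UNIV. G (w x) m a a) = (\<Sum>a\<in>UNIV. \<Sum>k\<in>UNIV. lam x k ^ Suc m * (chi k a * chi k a)) / 4"
    by (simp add: G_closed sum_divide_distrib mult.assoc)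
  also have "\<dots> = (\<Sum>k\<in>UNIV. \<Sum>a\<in>UNIV. lam x k ^ Suc m * (chi k a * chi k a)) / 4"
    by (subst sum.swap) (rule refl)
  also have "\<dots> = (\<Sum>k\<in>UNIV. lam x k ^ Suc m)"
  proof -
    have "card (UNIV::(bool\<times>bool) set) = 4"
      by (simp add: card_UNIV_bool card_cartesian_product UNIV_Times_UNIV[symmetric] del: UNIV_Times_UNIV)
    then show ?thesis by (simp add: chi_sq flip: sum_distrib_left)
  qed
  finally show ?thesis .
qed



lemma configs_enc: "configs n = map enc ` {ys. length ys = n}"
proof
  show "configs n \<subseteq> map enc ` {ys. length ys = n}"
  proof
    fix xs assume "xs \<in> configs n"
    then have "length xs = n" "set xs \<subseteq> range enc" by (auto simp: configs_def P_enc)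
    then obtain ys where "xs = map enc ys" using ex_map_conv[of xs enc] by blast
    then show "xs \<in> map enc ` {ys. length ys = n}" using \<open>length xs = n\<close> by auto
  qed
  show "map enc ` {ys. length ys = n} \<subseteq> configs n"
    by (auto simp: configs_def P_enc)
qed

lemma exp_phi: "exp (\<beta> * J * phi2 (enc p) (enc q)) = exp (\<beta> * J) * w (exp (- \<beta> * J)) p q"
  by (auto simp: phi2_enc w_def simp flip: exp_add)

lemma ham: assumes "length ys = n" "n \<ge> 1"
  shows "exp (- \<beta> * hamiltonian J H (map enc ys))
     = exp (\<beta> * J) ^ n * (\<Prod>i<n. w (exp (- \<beta> * J)) (ys!i) (ys!((i+1) mod n)))"
proof -
  have "hamiltonian J H (map enc ys) = - J * (\<Sum>i<n. phi2 (enc (ys!i)) (enc (ys!((i+1) mod n))))"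
    unfolding hamiltonian_def using assms by (simp add: phi1_enc)
  then have "- \<beta> * hamiltonian J H (map enc ys) = (\<Sum>i<n. \<beta> * J * phi2 (enc (ys!i)) (enc (ys!((i+1) mod n))))"
    by (simp add: sum_distrib_left mult.assoc)
  then have "exp (- \<beta> * hamiltonian J H (map enc ys)) = (\<Prod>i<n. exp (\<beta> * J) * w (exp (- \<beta> * J)) (ys!i) (ys!((i+1) mod n)))"
    by (simp add: exp_sum exp_phi)
  then show ?thesis by (simp add: prod.distrib)
qed

lemma Z_formula: assumes "n \<ge> 1"
  shows "Z J H n \<beta> = exp (\<beta> * J) ^ n * (\<Sum>k\<in>UNIV. lam (exp (- \<beta> * J)) k ^ n)"
proof -
  obtain m where n: "n = Suc m" using assms by (cases n) auto
  have "Z J H n \<beta> = (\<Sum>ys\<in>{ys. length ys = n}. exp (- \<beta> * hamiltonian J H (map enc ys)))"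
    unfolding Z_def configs_enc
    by (subst sum.reindex) (auto intro: inj_on_subset[OF inj_mapI[OF enc_inj]])
  also have "\<dots> = (\<Sum>ys\<in>{ys. length ys = n}. exp (\<beta> * J) ^ n * (\<Prod>i<n. w (exp (- \<beta> * J)) (ys!i) (ys!((i+1) mod n))))"
  proof (intro sum.cong refl)
    fix ys :: "(bool \<times> bool) list" assume "ys \<in> {ys. length ys = n}"
    then show "exp (- \<beta> * hamiltonian J H (map enc ys)) = exp (\<beta> * J) ^ n * (\<Prod>i<n. w (exp (- \<beta> * J)) (ys!i) (ys!((i+1) mod n)))"
      using assms by (intro ham) auto
  qed
  also have "\<dots> = exp (\<beta> * J) ^ n * (\<Sum>ys\<in>{ys. length ys = n}. (\<Prod>i<n. w (exp (- \<beta> * J)) (ys!i) (ys!((i+1) mod n))))"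
    by (simp add: sum_distrib_left)
  also have "\<dots> = exp (\<beta> * J) ^ n * (\<Sum>k\<in>UNIV. lam (exp (- \<beta> * J)) k ^ n)"
    unfolding n cyc_eq trace ..
  finally show ?thesis .
qed

lemma Z_closed: assumes "n \<ge> 1"
  shows "Z J H n \<beta> = exp (\<beta> * J * real n) *
             (2 * (1 - exp (- \<beta> * J)) ^ n * (1 + exp (- \<beta> * J)) ^ n
              + (1 - exp (- \<beta> * J)) ^ (2 * n) + (1 + exp (- \<beta> * J)) ^ (2 * n))"
proof -
  have e: "exp (\<beta> * J * real n) = exp (\<beta> * J) ^ n"
    using exp_of_nat_mult[of n "\<beta> * J"] by (simp add: mult.commute)
  define x where "x = exp (- \<beta> * J)"
  define A where "A = (1 + x) ^ n"
  define B where "B = (1 - x) ^ n"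
  have s: "(\<Sum>k\<in>UNIV. lam x k ^ n) = A*A + A*B + B*A + B*B"
    unfolding sum_bb lam_def A_def B_def by (simp add: power_mult_distrib)
  have p: "(1 - x) ^ (2 * n) = B*B" "(1 + x) ^ (2 * n) = A*A"
    unfolding A_def B_def by (simp_all add: mult_2 power_add)
  have alg: "E*(A*A+A*B+B*A+B*B) = E*(2*B*A + B*B + A*A)" for E :: real by algebra
  show ?thesis unfolding Z_formula[OF assms] e x_def[symmetric] s p alg A_def[symmetric] B_def[symmetric] ..
qed



theorem theorem3:
  fixes \<beta> J H :: real
  assumes "\<beta> > 0" and "J > 0"
  shows "(\<forall>n::nat. n \<ge> 1 \<longrightarrow>
           Z J H n \<beta> = exp (\<beta> * J * real n) *
             (2 * (1 - exp (- \<beta> * J)) ^ n * (1 + exp (- \<beta> * J)) ^ n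
              + (1 - exp (- \<beta> * J)) ^ (2 * n) + (1 + exp (- \<beta> * J)) ^ (2 * n)))
       \<and> ((\<lambda>n. - (1 / (\<beta> * real n)) * ln (Z J H n \<beta>))
            \<longlonglongrightarrow> - J - (2 / \<beta>) * ln (1 + exp (- \<beta> * J)))"
proof
  show "\<forall>n::nat. n \<ge> 1 \<longrightarrow>
           Z J H n \<beta> = exp (\<beta> * J * real n) *
             (2 * (1 - exp (- \<beta> * J)) ^ n * (1 + exp (- \<beta> * J)) ^ n
              + (1 - exp (- \<beta> * J)) ^ (2 * n) + (1 + exp (- \<beta> * J)) ^ (2 * n))"
    using Z_closed by blast
  define x where "x = exp (- \<beta> * J)"
  have x0: "0 < x" unfolding x_def by simp
  have x1: "x < 1" unfolding x_def using assms by simp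
  define r where "r = (1 - x) / (1 + x)"
  have r0: "0 < r" "r < 1" unfolding r_def using x0 x1 by auto
  have key: "- (1 / (\<beta> * real n)) * ln (Z J H n \<beta>)
      = - J - (2 / \<beta>) * ln (1 + x) - (2 / \<beta>) * (ln (1 + r ^ n) * (1 / real n))" if n: "n \<ge> 1" for n
  proof -
    define A where "A = (1 + x) ^ n"
    have A0: "A > 0" unfolding A_def using x0 by simp
    have B: "(1 - x) ^ n = A * r ^ n"
      unfolding A_def r_def using x0 by (simp add: power_divide)
    have sq: "(1 - x) ^ (2 * n) = (1 - x) ^ n * (1 - x) ^ n" "(1 + x) ^ (2 * n) = A * A"
      unfolding A_def by (simp_all only: mult_2 power_add)
    have alg2: "2 * (A * q) * A + (A * q) * (A * q) + A * A = (A * (1 + q)) ^ 2" for q :: real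
      by algebra
    have "Z J H n \<beta> = exp (\<beta> * J * real n) * (2 * (1 - x) ^ n * A + (1 - x) ^ (2 * n) + (1 + x) ^ (2 * n))"
      using Z_closed[OF n, of J H \<beta>] unfolding x_def A_def .
    also have "\<dots> = exp (\<beta> * J * real n) * (2 * (A * r ^ n) * A + (A * r ^ n) * (A * r ^ n) + A * A)"
      by (simp only: sq B)
    also have "\<dots> = exp (\<beta> * J * real n) * (A * (1 + r ^ n)) ^ 2"
      by (simp only: alg2)
    finally have Zeq: "Z J H n \<beta> = exp (\<beta> * J * real n) * (A * (1 + r ^ n)) ^ 2" .
    have q0: "1 + r ^ n > 0" using r0 by (simp add: add_pos_nonneg)
    have pos: "A * (1 + r ^ n) > 0" using A0 r0 by (simp add: add_pos_pos)
    have "ln (Z J H n \<beta>) = \<beta> * J * real n + 2 * ln (A * (1 + r ^ n))"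
      unfolding Zeq using pos A0 q0 by (simp add: ln_mult ln_realpow)
    also have "ln (A * (1 + r ^ n)) = real n * ln (1 + x) + ln (1 + r ^ n)"
      using A0 q0 x0 by (simp add: ln_mult A_def ln_realpow add_pos_pos)
    finally have lnZ: "ln (Z J H n \<beta>) = \<beta> * J * real n + 2 * (real n * ln (1 + x) + ln (1 + r ^ n))" .
    have nn: "real n > 0" using n by simp
    show ?thesis unfolding lnZ using nn assms(1)
      by (simp add: field_simps)
  qed
  have l1: "(\<lambda>n. r ^ n) \<longlonglongrightarrow> 0" using r0 by (intro LIMSEQ_power_zero) simp
  have l2: "(\<lambda>n. ln (1 + r ^ n)) \<longlonglongrightarrow> ln (1 + 0)" by (intro tendsto_intros l1) simp
  have l3: "(\<lambda>n. ln (1 + r ^ n) * (1 / real n)) \<longlonglongrightarrow> 0 * 0"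
    using tendsto_mult[OF l2 lim_inverse_n'] by simp
  have l4: "(\<lambda>n. - J - (2 / \<beta>) * ln (1 + x) - (2 / \<beta>) * (ln (1 + r ^ n) * (1 / real n)))
      \<longlonglongrightarrow> - J - (2 / \<beta>) * ln (1 + x) - (2 / \<beta>) * (0 * 0)"
    by (intro tendsto_intros l3)
  have ev: "eventually (\<lambda>n. - J - (2 / \<beta>) * ln (1 + x) - (2 / \<beta>) * (ln (1 + r ^ n) * (1 / real n))
      = - (1 / (\<beta> * real n)) * ln (Z J H n \<beta>)) sequentially"
    unfolding eventually_sequentially using key by (metis One_nat_def)
  show "(\<lambda>n. - (1 / (\<beta> * real n)) * ln (Z J H n \<beta>))
            \<longlonglongrightarrow> - J - (2 / \<beta>) * ln (1 + exp (- \<beta> * J))"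
    using Lim_transform_eventually[OF l4 ev] unfolding x_def by simp
qed

end
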